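(* Let $R=R_0\oplus\cdots\oplus R_{p-1}$ be a commutative $\mathbb Z/p\mathbb Z$-graded $F$-algebra, $I=\sum_{i+j=p}R_iR_j\subset R_0$, $J=I\oplus R_1\oplus\cdots\oplus R_{p-1}$, and $\tilde R=\cdots\oplus J^2t^{-2}\oplus Jt^{-1}\oplus R\oplus Rt\oplus\cdots\subset R[t,t^{-1}]$ with the induced $\mathbb Z/p\mathbb Z$-grading ($t$ of degree $0$), $\tilde I=\sum_{i+j=p}\tilde R_i\tilde R_j$. Let $X=\mathrm{Spec}\,R$ and $D=\mathrm{Spec}\,\tilde R$ (the deformation variety of $X^G\subset X$). Then $D^G\cong X^G\times\mathbb A^1$, i.e. $\tilde R_0/\tilde I\cong(R_0/I)[t]$.
   Context: $p$ is a prime and $F$ a field; $G=\mu_p$. For an affine scheme $Y=\mathrm{Spec}\,S$ with $\mathbb Z/p\mathbb Z$-graded ring $S=S_0\oplus\cdots\oplus S_{p-1}$ (equivalently a $G$-action), the fixed-point subscheme is $Y^G=\mathrm{Spec}(S_0/\sum_{i+j=p}S_iS_j)$, sums over $1\le i,j\le p-1$. Thus $X^G=\mathrm{Spec}(R/J)=\mathrm{Spec}(R_0/I)$. *)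

theory Defs
  imports "HOL-Algebra.QuotRing" "HOL-Algebra.UnivPoly"
          "HOL-Computational_Algebra.Formal_Laurent_Series"
begin

inductive_set add_closure :: "'b::ab_group_add set \<Rightarrow> 'b set" for S where
  ac_zero: "0 \<in> add_closure S"
| ac_base: "x \<in> S \<Longrightarrow> x \<in> add_closure S"
| ac_add: "x \<in> add_closure S \<Longrightarrow> y \<in> add_closure S \<Longrightarrow> x + y \<in> add_closure S"

inductive_set ideal_gen :: "'b::comm_ring_1 set \<Rightarrow> 'b set" for S where
  ig_zero: "0 \<in> ideal_gen S"
| ig_base: "x \<in> S \<Longrightarrow> x \<in> ideal_gen S"
| ig_add: "x \<in> ideal_gen S \<Longrightarrow> y \<in> ideal_gen S \<Longrightarrow> x + y \<in> ideal_gen S"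
| ig_mult: "x \<in> ideal_gen S \<Longrightarrow> r * x \<in> ideal_gen S"

fun ideal_pow :: "'b::comm_ring_1 set \<Rightarrow> nat \<Rightarrow> 'b set" where
  "ideal_pow J 0 = UNIV"
| "ideal_pow J (Suc k) = ideal_gen {a * b | a b. a \<in> J \<and> b \<in> ideal_pow J k}"

definition zp_graded_F_algebra ::
    "nat \<Rightarrow> ('f::field \<Rightarrow> 'a::comm_ring_1) \<Rightarrow> (nat \<Rightarrow> 'a set) \<Rightarrow> bool" where
  "zp_graded_F_algebra p \<phi> G \<longleftrightarrow>
     \<phi> 1 = 1 \<and> (\<forall>a b. \<phi> (a + b) = \<phi> a + \<phi> b) \<and> (\<forall>a b. \<phi> (a * b) = \<phi> a * \<phi> b) \<and>
     (\<forall>i<p. 0 \<in> G i \<and> (\<forall>x\<in>G i. \<forall>y\<in>G i. x + y \<in> G i) \<and> (\<forall>c. \<forall>x\<in>G i. \<phi> c * x \<in> G i)) \<and>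
     (\<forall>i<p. \<forall>j<p. \<forall>x\<in>G i. \<forall>y\<in>G j. x * y \<in> G ((i + j) mod p)) \<and>
     (\<forall>x. \<exists>!c. (\<forall>i<p. c i \<in> G i) \<and> (\<forall>i\<ge>p. c i = 0) \<and> x = (\<Sum>i<p. c i))"

definition fixed_ideal :: "nat \<Rightarrow> (nat \<Rightarrow> 'b::comm_ring_1 set) \<Rightarrow> 'b set" where
  "fixed_ideal p G = add_closure {x * y | x y. \<exists>i j. 1 \<le> i \<and> i < p \<and> 1 \<le> j \<and> j < p \<and>
      i + j = p \<and> x \<in> G i \<and> y \<in> G j}"

definition J_ideal :: "nat \<Rightarrow> (nat \<Rightarrow> 'b::comm_ring_1 set) \<Rightarrow> 'b set" where
  "J_ideal p G = add_closure (fixed_ideal p G \<union> (\<Union>i\<in>{1..<p}. G i))"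

definition laurent_polys :: "'a::comm_ring_1 fls set" where
  "laurent_polys = {f. finite {n. fls_nth f n \<noteq> 0}}"

text \<open>Extended Rees algebra  ... + J^2 t^-2 + J t^-1 + R + R t + ...\<close>
definition rees_ext :: "nat \<Rightarrow> (nat \<Rightarrow> 'a::comm_ring_1 set) \<Rightarrow> 'a fls set" where
  "rees_ext p G = {f \<in> laurent_polys. \<forall>n<0. fls_nth f n \<in> ideal_pow (J_ideal p G) (nat (- n))}"

text \<open>Induced Z/pZ-grading on the extended Rees algebra (t of degree 0).\<close>
definition rees_grading :: "nat \<Rightarrow> (nat \<Rightarrow> 'a::comm_ring_1 set) \<Rightarrow> nat \<Rightarrow> 'a fls set" where
  "rees_grading p G i = {f \<in> rees_ext p G. \<forall>n. fls_nth f n \<in> G i}"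

definition ring_of :: "'b::comm_ring_1 set \<Rightarrow> 'b ring" where
  "ring_of S = \<lparr>carrier = S, monoid.mult = (*), monoid.one = 1, ring.zero = 0, ring.add = (+)\<rparr>"

end

theory Submission
  imports Defs
begin

unbundle fps_syntax


lemma ring_of_cring:
  fixes S :: "'b::comm_ring_1 set"
  assumes "0 \<in> S" "1 \<in> S" "\<And>x y. x \<in> S \<Longrightarrow> y \<in> S \<Longrightarrow> x + y \<in> S"
    "\<And>x y. x \<in> S \<Longrightarrow> y \<in> S \<Longrightarrow> x * y \<in> S" "\<And>x. x \<in> S \<Longrightarrow> - x \<in> S"
  shows "cring (ring_of S)"
proof (rule cringI)
  show "abelian_group (ring_of S)"
    by (rule abelian_groupI) (auto simp: ring_of_def assms intro!: bexI[of _ "- _"])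
  show "Group.comm_monoid (ring_of S)"
    by (rule comm_monoidI) (auto simp: ring_of_def assms mult.assoc mult.commute)
qed (auto simp: ring_of_def distrib_right)

lemma ac_sum: "finite A \<Longrightarrow> (\<And>x. x \<in> A \<Longrightarrow> f x \<in> add_closure S) \<Longrightarrow> sum f A \<in> add_closure S"
  by (induction A rule: finite_induct) (auto intro: add_closure.intros)

lemma ac_mono: "x \<in> add_closure S \<Longrightarrow> S \<subseteq> T \<Longrightarrow> x \<in> add_closure T"
  by (induction rule: add_closure.induct) (auto intro: add_closure.intros)

lemma ip_zero: "0 \<in> ideal_pow J k"
  by (cases k) (auto intro: ideal_gen.intros)

lemma ip_add: "x \<in> ideal_pow J k \<Longrightarrow> y \<in> ideal_pow J k \<Longrightarrow> x + y \<in> ideal_pow J k"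
  by (cases k) (auto intro: ideal_gen.intros)

lemma ip_mult: "x \<in> ideal_pow J k \<Longrightarrow> r * x \<in> ideal_pow J k"
  by (cases k) (auto intro: ideal_gen.intros)

lemma ip_mult2: "x \<in> ideal_pow J k \<Longrightarrow> x * r \<in> ideal_pow J k"
  using ip_mult[of x J k r] by (simp add: mult.commute)

lemma ip_neg: "x \<in> ideal_pow J k \<Longrightarrow> - x \<in> ideal_pow J k"
  using ip_mult[of x J k "-1"] by simp

lemma ip_sum: "finite A \<Longrightarrow> (\<And>x. x \<in> A \<Longrightarrow> f x \<in> ideal_pow J k) \<Longrightarrow> sum f A \<in> ideal_pow J k"
  by (induction A rule: finite_induct) (auto intro: ip_zero ip_add)

lemma ip_Suc: "ideal_pow J (Suc k) \<subseteq> ideal_pow J k"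
proof
  fix x assume "x \<in> ideal_pow J (Suc k)"
  then have "x \<in> ideal_gen {a * b |a b. a \<in> J \<and> b \<in> ideal_pow J k}" by simp
  then show "x \<in> ideal_pow J k"
    by (induction rule: ideal_gen.induct) (auto intro: ip_zero ip_add ip_mult)
qed

lemma ip_anti: "k \<le> m \<Longrightarrow> ideal_pow J m \<subseteq> ideal_pow J k"
  by (induction m rule: dec_induct) (use ip_Suc in blast)+

lemma J_ip1: "x \<in> J \<Longrightarrow> x \<in> ideal_pow J 1"
proof -
  assume h: "x \<in> J"
  have "x \<in> {a * b |a b. a \<in> J \<and> b \<in> ideal_pow J 0}"
  proof -
    have "x = x * 1 \<and> x \<in> J \<and> 1 \<in> ideal_pow J 0" using h by simp
    then show ?thesis by blast
  qed
  then show ?thesis by (simp add: ideal_gen.ig_base)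
qed

lemma ip_prod: "x \<in> ideal_pow J a \<Longrightarrow> y \<in> ideal_pow J b \<Longrightarrow> x * y \<in> ideal_pow J (a + b)"
proof (induction a arbitrary: x)
  case 0 then show ?case by (simp add: ip_mult)
next
  case (Suc a)
  from Suc.prems(1) have "x \<in> ideal_gen {u * v |u v. u \<in> J \<and> v \<in> ideal_pow J a}" by simp
  then show ?case
  proof (induction rule: ideal_gen.induct)
    case ig_zero then show ?case by (metis ip_zero mult_zero_left)
  next
    case (ig_base x)
    then obtain u v where x: "x = u * v" "u \<in> J" "v \<in> ideal_pow J a" by auto
    have "v * y \<in> ideal_pow J (a + b)" using Suc.IH x(3) Suc.prems(2) by blast
    then have "u * (v * y) \<in> ideal_pow J (Suc (a + b))"
      using x(2) by (auto intro: ideal_gen.ig_base)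
    then show ?case using x(1) by (simp add: mult.assoc)
  next
    case (ig_add x z) then show ?case using ip_add[of "x*y" J "Suc a + b" "z*y"] by (simp only: distrib_right)
  next
    case (ig_mult x r) then show ?case by (simp add: mult.assoc ip_mult del: ideal_pow.simps)
  qed
qed



locale zpg =
  fixes p :: nat and \<phi> :: "'f::field \<Rightarrow> 'a::comm_ring_1" and G :: "nat \<Rightarrow> 'a set"
  assumes prime: "prime p" and gr: "zp_graded_F_algebra p \<phi> G"
begin

lemma p_gt1: "1 < p" using prime_gt_1_nat[OF prime] by simp

lemma phi_1: "\<phi> 1 = 1" and phi_add: "\<phi> (a + b) = \<phi> a + \<phi> b" and phi_mult: "\<phi> (a * b) = \<phi> a * \<phi> b"
  using gr by (auto simp: zp_graded_F_algebra_def)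

lemma G0: "i < p \<Longrightarrow> 0 \<in> G i" and Gadd: "i < p \<Longrightarrow> x \<in> G i \<Longrightarrow> y \<in> G i \<Longrightarrow> x + y \<in> G i"
  and Gsmult: "i < p \<Longrightarrow> x \<in> G i \<Longrightarrow> \<phi> c * x \<in> G i"
  and Gmult: "i < p \<Longrightarrow> j < p \<Longrightarrow> x \<in> G i \<Longrightarrow> y \<in> G j \<Longrightarrow> x * y \<in> G ((i + j) mod p)"
  using gr by (auto simp: zp_graded_F_algebra_def)

lemma dec_ex: "\<exists>!c. (\<forall>i<p. c i \<in> G i) \<and> (\<forall>i\<ge>p. c i = 0) \<and> x = (\<Sum>i<p. c i)"
  using gr by (auto simp: zp_graded_F_algebra_def)

definition dec :: "'a \<Rightarrow> nat \<Rightarrow> 'a" where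
  "dec x = (THE c. (\<forall>i<p. c i \<in> G i) \<and> (\<forall>i\<ge>p. c i = 0) \<and> x = (\<Sum>i<p. c i))"

lemma dec_prop: "(\<forall>i<p. dec x i \<in> G i) \<and> (\<forall>i\<ge>p. dec x i = 0) \<and> x = (\<Sum>i<p. dec x i)"
  unfolding dec_def by (rule theI'[OF dec_ex])

lemma dec_in: "i < p \<Longrightarrow> dec x i \<in> G i" using dec_prop by blast
lemma dec_sum: "x = (\<Sum>i<p. dec x i)" using dec_prop by blast

lemma dec_unique: "(\<And>i. i < p \<Longrightarrow> c i \<in> G i) \<Longrightarrow> (\<And>i. i \<ge> p \<Longrightarrow> c i = 0) \<Longrightarrow> x = (\<Sum>i<p. c i)
   \<Longrightarrow> dec x = c"
  using dec_ex[of x] dec_prop[of x] by blast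

lemma Gneg: "i < p \<Longrightarrow> x \<in> G i \<Longrightarrow> - x \<in> G i"
proof -
  assume "i < p" "x \<in> G i"
  have "\<phi> 0 = \<phi> 0 + \<phi> 0" using phi_add[of 0 0] by simp
  then have z: "\<phi> 0 = 0" by simp
  have "\<phi> (-1) + 1 = 0" using phi_add[of "-1" 1] phi_1 z by simp
  then have "\<phi> (-1) = -1" by (metis add_eq_0_iff minus_minus)
  then show ?thesis using Gsmult[OF \<open>i<p\<close> \<open>x \<in> G i\<close>, of "-1"] by simp
qed

lemma Gsum: assumes "i < p" shows "finite A \<Longrightarrow> (\<And>x. x \<in> A \<Longrightarrow> f x \<in> G i) \<Longrightarrow> sum f A \<in> G i"
  by (induction A rule: finite_induct) (auto intro: G0 Gadd assms)

lemma dec_homog: assumes "d < p" "x \<in> G d" shows "dec x = (\<lambda>i. if i = d then x else 0)"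
proof (rule dec_unique)
  show "x = (\<Sum>i<p. if i = d then x else 0)" using assms by (simp add: sum.delta)
qed (use assms G0 in auto)

lemma dec_zero: "dec 0 = (\<lambda>i. 0)"
  by (rule dec_unique) (auto intro: G0)

lemma dec_add: "dec (x + y) = (\<lambda>i. dec x i + dec y i)"
  by (rule dec_unique) (auto intro: Gadd dec_in simp: dec_prop sum.distrib dec_sum[symmetric])

lemma dec_mult: assumes "d < p"
  shows "dec (x * y) d = (\<Sum>e<p. dec x e * dec y ((d + p - e) mod p))"
proof -
  define c where "c d = (if d < p then (\<Sum>e<p. dec x e * dec y ((d + p - e) mod p)) else 0)" for d
  have "dec (x * y) = c"
  proof (rule dec_unique)
    fix i assume i: "i < p"
    have "dec x e * dec y ((i + p - e) mod p) \<in> G i" if "e < p" for e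
    proof -
      have "dec x e * dec y ((i + p - e) mod p) \<in> G ((e + (i + p - e) mod p) mod p)"
        using Gmult[of e "(i + p - e) mod p"] that p_gt1 dec_in by auto
      moreover have "(e + (i + p - e) mod p) mod p = i"
        using that i by (simp add: mod_add_right_eq)
      ultimately show ?thesis by simp
    qed
    then show "c i \<in> G i" using i by (auto simp: c_def intro!: Gsum)
  next
    show "\<And>i. p \<le> i \<Longrightarrow> c i = 0" by (simp add: c_def)
  next
    have "(\<Sum>i<p. c i) = (\<Sum>i<p. \<Sum>e<p. dec x e * dec y ((i + p - e) mod p))"
      by (simp add: c_def)
    also have "\<dots> = (\<Sum>e<p. dec x e * (\<Sum>i<p. dec y ((i + p - e) mod p)))"
      by (subst sum.swap) (simp add: sum_distrib_left)
    also have "\<dots> = (\<Sum>e<p. dec x e * (\<Sum>i<p. dec y i))"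
    proof (rule sum.cong[OF refl])
      fix e assume e: "e \<in> {..<p}"
      have "bij_betw (\<lambda>i. (i + p - e) mod p) {..<p} {..<p}"
      proof (rule bij_betw_imageI)
        show "inj_on (\<lambda>i. (i + p - e) mod p) {..<p}"
        proof
          fix a b assume ab: "a \<in> {..<p}" "b \<in> {..<p}" "(a + p - e) mod p = (b + p - e) mod p"
          then have "int (a + p - e) mod int p = int (b + p - e) mod int p"
            by (metis of_nat_mod)
          then have "(int a + (int p - int e)) mod int p = (int b + (int p - int e)) mod int p"
            using e ab by (simp add: of_nat_diff add_diff_eq)
          then have "int a mod int p = int b mod int p" by (metis mod_diff_cong add_diff_cancel_right')
          then show "a = b" using ab by simp
        qed
        then show "(\<lambda>i. (i + p - e) mod p) ` {..<p} = {..<p}"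
          using p_gt1 by (intro endo_inj_surj) auto
      qed
      then show "dec x e * (\<Sum>i<p. dec y ((i + p - e) mod p)) = dec x e * (\<Sum>i<p. dec y i)"
        using sum.reindex_bij_betw[of "\<lambda>i. (i + p - e) mod p" "{..<p}" "{..<p}" "dec y"] by simp
    qed
    also have "\<dots> = (\<Sum>e<p. dec x e) * (\<Sum>i<p. dec y i)" by (simp only: sum_distrib_right)
    also have "\<dots> = x * y" using dec_sum[of x] dec_sum[of y] by simp
    finally show "x * y = (\<Sum>i<p. c i)" by simp
  qed
  then show ?thesis using assms by (simp add: c_def)
qed

lemma dec_mult0: "dec (x * y) 0 = dec x 0 * dec y 0 + (\<Sum>e\<in>{1..<p}. dec x e * dec y (p - e))"
proof -
  have "dec (x * y) 0 = (\<Sum>e<p. dec x e * dec y ((p - e) mod p))"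
    using dec_mult[of 0] p_gt1 by simp
  also have "{..<p} = insert 0 {1..<p}" using p_gt1 by auto
  also have "(\<Sum>e\<in>insert 0 {1..<p}. dec x e * dec y ((p - e) mod p)) =
     dec x 0 * dec y 0 + (\<Sum>e\<in>{1..<p}. dec x e * dec y ((p - e) mod p))" by simp
  also have "(\<Sum>e\<in>{1..<p}. dec x e * dec y ((p - e) mod p)) = (\<Sum>e\<in>{1..<p}. dec x e * dec y (p - e))"
    by (rule sum.cong) auto
  finally show ?thesis .
qed

lemma dec_one_rel: assumes "x \<in> G j" "j < p" "i < p"
  shows "dec x i = x * dec 1 ((i + p - j) mod p)"
proof -
  have "dec (x * 1) i = (\<Sum>e<p. dec x e * dec 1 ((i + p - e) mod p))" using dec_mult assms by blast
  also have "\<dots> = (\<Sum>e<p. if e = j then x * dec 1 ((i + p - e) mod p) else 0)"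
    by (rule sum.cong) (auto simp: dec_homog[OF assms(2,1)])
  also have "\<dots> = x * dec 1 ((i + p - j) mod p)" using assms by (simp add: sum.delta)
  finally show ?thesis by simp
qed

lemma one_G0: "1 \<in> G 0"
proof -
  have p0: "0 < p" using p_gt1 by simp
  have z: "dec 1 k = 0" if "k < p" "k \<noteq> 0" for k
  proof -
    have a: "dec (dec 1 k) k = dec 1 k * dec 1 0"
      using dec_one_rel[OF dec_in[OF that(1)] that(1) that(1)] by simp
    have b: "dec (dec 1 0) k = dec 1 0 * dec 1 k"
      using dec_one_rel[OF dec_in[OF p0] p0 that(1)] that by simp
    have "dec (dec 1 k) k = dec 1 k" using dec_homog[OF that(1) dec_in[OF that(1)]] by simp
    moreover have "dec (dec 1 0) k = 0" using dec_homog[OF p0 dec_in[OF p0]] that by simp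
    ultimately show ?thesis using a b by (simp add: mult.commute)
  qed
  have "1 = (\<Sum>i<p. dec 1 i)" by (rule dec_sum)
  also have "\<dots> = (\<Sum>i<p. if i = 0 then dec 1 0 else 0)"
    by (rule sum.cong) (auto simp: z)
  also have "\<dots> = dec 1 0" using p0 by (simp add: sum.delta)
  finally show ?thesis using dec_in[OF p0, of 1] by metis
qed

end


context zpg begin

abbreviation "I \<equiv> fixed_ideal p G"
abbreviation "Jd \<equiv> J_ideal p G"
abbreviation "Jp k \<equiv> ideal_pow Jd k"

lemma I_G0: "x \<in> I \<Longrightarrow> x \<in> G 0"
  unfolding fixed_ideal_def
proof (induction rule: add_closure.induct)
  case ac_zero then show ?case using G0 p_gt1 by simp
next
  case (ac_base x)
  then obtain a b i j where "x = a * b" "1 \<le> i" "i < p" "1 \<le> j" "j < p" "i + j = p" "a \<in> G i" "b \<in> G j"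
    by blast
  then show ?case using Gmult[of i j a b] by simp
next
  case (ac_add x y) then show ?case using Gadd p_gt1 by simp
qed

lemma I_add: "x \<in> I \<Longrightarrow> y \<in> I \<Longrightarrow> x + y \<in> I"
  unfolding fixed_ideal_def by (rule add_closure.ac_add)

lemma I_zero: "0 \<in> I"
  unfolding fixed_ideal_def by (rule add_closure.ac_zero)

lemma I_gen: "1 \<le> i \<Longrightarrow> i < p \<Longrightarrow> 1 \<le> j \<Longrightarrow> j < p \<Longrightarrow> i + j = p \<Longrightarrow> x \<in> G i \<Longrightarrow> y \<in> G j \<Longrightarrow> x * y \<in> I"
  unfolding fixed_ideal_def by (rule add_closure.ac_base) blast

lemma I_sum: "finite A \<Longrightarrow> (\<And>x. x \<in> A \<Longrightarrow> f x \<in> I) \<Longrightarrow> sum f A \<in> I"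
  unfolding fixed_ideal_def by (rule ac_sum)

lemma I_mult: "x \<in> I \<Longrightarrow> r \<in> G 0 \<Longrightarrow> r * x \<in> I"
  unfolding fixed_ideal_def
proof (induction rule: add_closure.induct)
  case ac_zero then show ?case by (simp add: add_closure.ac_zero)
next
  case (ac_base x)
  then obtain a b i j where ab: "x = a * b" "1 \<le> i" "i < p" "1 \<le> j" "j < p" "i + j = p" "a \<in> G i" "b \<in> G j"
    by blast
  have "r * a \<in> G i" using Gmult[of 0 i r a] ab ac_base.prems p_gt1 by simp
  then have "(r * a) * b \<in> I" using I_gen ab by blast
  then show ?case using ab by (simp add: mult.assoc fixed_ideal_def)
next
  case (ac_add x y) then show ?case by (simp add: distrib_left add_closure.ac_add)
qed

lemma I_neg: "x \<in> I \<Longrightarrow> - x \<in> I"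
  unfolding fixed_ideal_def
proof (induction rule: add_closure.induct)
  case ac_zero then show ?case by (simp add: add_closure.ac_zero)
next
  case (ac_base x)
  then obtain a b i j where ab: "x = a * b" "1 \<le> i" "i < p" "1 \<le> j" "j < p" "i + j = p" "a \<in> G i" "b \<in> G j"
    by blast
  have "(- a) * b \<in> I" using I_gen ab Gneg by blast
  then show ?case using ab by (simp add: fixed_ideal_def)
next
  case (ac_add x y) then show ?case using add_closure.ac_add[OF ac_add.IH] by simp
qed

lemma Gi_J: "1 \<le> i \<Longrightarrow> i < p \<Longrightarrow> x \<in> G i \<Longrightarrow> x \<in> Jd"
  unfolding J_ideal_def by (rule add_closure.ac_base) auto

lemma I_J: "x \<in> I \<Longrightarrow> x \<in> Jd"
  unfolding J_ideal_def by (rule add_closure.ac_base) auto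

lemma J_dec: "x \<in> Jd \<Longrightarrow> (\<forall>d<p. dec x d \<in> Jd) \<and> dec x 0 \<in> I"
  unfolding J_ideal_def
proof (induction rule: add_closure.induct)
  case ac_zero then show ?case by (simp add: dec_zero add_closure.ac_zero I_zero)
next
  case (ac_base x)
  then show ?case
  proof
    assume xI: "x \<in> I"
    then have "dec x = (\<lambda>i. if i = 0 then x else 0)" using dec_homog[of 0 x] I_G0 p_gt1 by simp
    then show ?thesis using xI I_J by (auto simp: J_ideal_def intro: add_closure.ac_zero)
  next
    assume "x \<in> (\<Union>i\<in>{1..<p}. G i)"
    then obtain i where i: "1 \<le> i" "i < p" "x \<in> G i" by auto
    then have "dec x = (\<lambda>j. if j = i then x else 0)" using dec_homog by simp
    then show ?thesis using i Gi_J[OF i] by (auto simp: J_ideal_def intro: add_closure.ac_zero I_zero)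
  qed
next
  case (ac_add x y) then show ?case by (simp add: dec_add add_closure.ac_add I_add)
qed

lemma J_G0: "x \<in> Jd \<Longrightarrow> x \<in> G 0 \<Longrightarrow> x \<in> I"
  using J_dec[of x] dec_homog[of 0 x] p_gt1 by simp

lemma homog: "x \<in> Jp k \<Longrightarrow> d < p \<Longrightarrow> dec x d \<in> Jp k"
proof (induction k arbitrary: x d)
  case 0 then show ?case by simp
next
  case (Suc k)
  from Suc.prems(1) have "x \<in> ideal_gen {u * v |u v. u \<in> Jd \<and> v \<in> Jp k}" by simp
  then have "\<forall>d<p. dec x d \<in> Jp (Suc k)"
  proof (induction rule: ideal_gen.induct)
    case ig_zero then show ?case by (simp add: dec_zero ip_zero del: ideal_pow.simps)
  next
    case (ig_base x)
    then obtain u v where uv: "x = u * v" "u \<in> Jd" "v \<in> Jp k" by blast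
    show ?case
    proof (intro allI impI)
      fix d assume d: "d < p"
      have "dec u e * dec v ((d + p - e) mod p) \<in> Jp (Suc k)" if "e < p" for e
      proof -
        have "dec u e \<in> Jd" using J_dec uv that by blast
        moreover have "dec v ((d + p - e) mod p) \<in> Jp k" using Suc.IH uv p_gt1 by simp
        ultimately show ?thesis by (auto intro: ideal_gen.ig_base)
      qed
      then show "dec x d \<in> Jp (Suc k)" using uv d dec_mult by (auto intro!: ip_sum simp del: ideal_pow.simps)
    qed
  next
    case (ig_add x y) then show ?case by (simp add: dec_add ip_add del: ideal_pow.simps)
  next
    case (ig_mult x r)
    show ?case
    proof (intro allI impI)
      fix d assume d: "d < p"
      have "dec r e * dec x ((d + p - e) mod p) \<in> Jp (Suc k)" if "e < p" for e
      proof -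
        have "(d + p - e) mod p < p" using p_gt1 by simp
        then have "dec x ((d + p - e) mod p) \<in> Jp (Suc k)" using ig_mult.IH by blast
        then show ?thesis by (rule ip_mult)
      qed
      then show "dec (r * x) d \<in> Jp (Suc k)" using d dec_mult by (auto intro!: ip_sum simp del: ideal_pow.simps)
    qed
  qed
  then show ?case using Suc.prems(2) by blast
qed

definition T :: "nat \<Rightarrow> 'a set" where
  "T k = add_closure {y * z | y z. \<exists>i j a b. 1 \<le> i \<and> i < p \<and> 1 \<le> j \<and> j < p \<and> i + j = p \<and> a + b = k
      \<and> y \<in> G i \<and> y \<in> Jp a \<and> z \<in> G j \<and> z \<in> Jp b}"

lemma T_gen: "1 \<le> i \<Longrightarrow> i < p \<Longrightarrow> 1 \<le> j \<Longrightarrow> j < p \<Longrightarrow> i + j = p \<Longrightarrow> a + b = k \<Longrightarrow>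
   y \<in> G i \<Longrightarrow> y \<in> Jp a \<Longrightarrow> z \<in> G j \<Longrightarrow> z \<in> Jp b \<Longrightarrow> y * z \<in> T k"
  unfolding T_def by (rule add_closure.ac_base) blast

lemma T_add: "x \<in> T k \<Longrightarrow> y \<in> T k \<Longrightarrow> x + y \<in> T k"
  unfolding T_def by (rule add_closure.ac_add)

lemma T_sum: "finite A \<Longrightarrow> (\<And>x. x \<in> A \<Longrightarrow> f x \<in> T k) \<Longrightarrow> sum f A \<in> T k"
  unfolding T_def by (rule ac_sum)

lemma T_mult: "x \<in> T k \<Longrightarrow> g \<in> G 0 \<Longrightarrow> g * x \<in> T k"
  unfolding T_def
proof (induction rule: add_closure.induct)
  case ac_zero then show ?case by (simp add: add_closure.ac_zero)
next
  case (ac_base x)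
  then obtain y z i j a b where yz: "x = y * z" "1 \<le> i" "i < p" "1 \<le> j" "j < p" "i + j = p" "a + b = k"
      "y \<in> G i" "y \<in> Jp a" "z \<in> G j" "z \<in> Jp b"
    by blast
  have "g * y \<in> G i" using Gmult[of 0 i g y] yz ac_base.prems p_gt1 by simp
  moreover have "g * y \<in> Jp a" using yz ip_mult by blast
  ultimately have "(g * y) * z \<in> T k" using T_gen yz by blast
  then show ?case using yz by (simp add: mult.assoc T_def)
next
  case (ac_add x y) then show ?case by (simp add: distrib_left add_closure.ac_add)
qed

lemma I_T: "x \<in> I \<Longrightarrow> w \<in> G 0 \<Longrightarrow> w \<in> Jp k \<Longrightarrow> x * w \<in> T (Suc k)"
  unfolding fixed_ideal_def
proof (induction rule: add_closure.induct)
  case ac_zero then show ?case by (simp add: add_closure.ac_zero T_def)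
next
  case (ac_base x)
  then obtain a b i j where ab: "x = a * b" "1 \<le> i" "i < p" "1 \<le> j" "j < p" "i + j = p" "a \<in> G i" "b \<in> G j"
    by blast
  have "a * w \<in> G i" using Gmult[of i 0 a w] ab ac_base.prems p_gt1 by simp
  moreover have "a * w \<in> Jp k" using ac_base.prems ip_mult by blast
  moreover have "b \<in> Jp 1" using Gi_J[of j b] ab J_ip1 by blast
  ultimately have "(a * w) * b \<in> T (Suc k)" using T_gen[of i j k 1 "Suc k" "a * w" b] ab by simp
  then show ?case using ab by (simp add: ac_simps)
next
  case (ac_add x y) then show ?case by (simp add: distrib_right add_closure.ac_add T_def)
qed

lemma T_I: "x \<in> T k \<Longrightarrow> x \<in> I"
  unfolding T_def
proof (induction rule: add_closure.induct)
  case ac_zero then show ?case by (simp add: I_zero)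
next
  case (ac_base x) then show ?case using I_gen by blast
next
  case (ac_add x y) then show ?case by (simp add: I_add)
qed

lemma T_main: "x \<in> Jp (Suc k) \<Longrightarrow> dec x 0 \<in> T (Suc k)"
proof -
  assume "x \<in> Jp (Suc k)"
  then have "x \<in> ideal_gen {u * v |u v. u \<in> Jd \<and> v \<in> Jp k}" by simp
  then show ?thesis
  proof (induction rule: ideal_gen.induct)
    case ig_zero then show ?case by (simp add: dec_zero T_def add_closure.ac_zero)
  next
    case (ig_base x)
    then obtain u v where uv: "x = u * v" "u \<in> Jd" "v \<in> Jp k" by blast
    have p0: "0 < p" using p_gt1 by simp
    have "dec u 0 * dec v 0 \<in> T (Suc k)"
      using I_T J_dec[OF uv(2)] dec_in[OF p0] homog[OF uv(3) p0] by blast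
    moreover have "dec u e * dec v (p - e) \<in> T (Suc k)" if e: "e \<in> {1..<p}" for e
    proof -
      have "dec u e \<in> Jp 1" using J_dec uv J_ip1 e by auto
      moreover have "dec v (p - e) \<in> Jp k" using homog uv e by auto
      ultimately show ?thesis using T_gen[of e "p - e" 1 k "Suc k"] e dec_in by auto
    qed
    ultimately have "dec u 0 * dec v 0 + (\<Sum>e\<in>{1..<p}. dec u e * dec v (p - e)) \<in> T (Suc k)"
      by (intro T_add T_sum) auto
    then show ?case using uv dec_mult0 by simp
  next
    case (ig_add x y) then show ?case by (simp add: dec_add T_def add_closure.ac_add)
  next
    case (ig_mult x r)
    have p0: "0 < p" using p_gt1 by simp
    have "dec r 0 * dec x 0 \<in> T (Suc k)"
      using T_mult ig_mult.IH dec_in[OF p0] by blast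
    moreover have "dec r e * dec x (p - e) \<in> T (Suc k)" if e: "e \<in> {1..<p}" for e
    proof -
      have "dec r e \<in> Jp 0" by simp
      moreover have "dec x (p - e) \<in> Jp (Suc k)"
      proof -
        have "x \<in> Jp (Suc k)" using ig_mult.hyps by simp
        moreover have "p - e < p" using e by auto
        ultimately show ?thesis by (rule homog)
      qed
      ultimately show ?thesis using T_gen[of e "p - e" 0 "Suc k" "Suc k"] e dec_in by auto
    qed
    ultimately have "dec r 0 * dec x 0 + (\<Sum>e\<in>{1..<p}. dec r e * dec x (p - e)) \<in> T (Suc k)"
      by (intro T_add T_sum) auto
    then show ?case using dec_mult0 by simp
  qed
qed

lemma Jp_G0: "x \<in> Jp (Suc k) \<Longrightarrow> x \<in> G 0 \<Longrightarrow> x \<in> T (Suc k)"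
  using T_main[of x k] dec_homog[of 0 x] p_gt1 by simp

end



lemma lp_iff: "f \<in> laurent_polys \<longleftrightarrow> (\<exists>N. \<forall>n>N. f $$ n = 0)"
proof
  assume "f \<in> laurent_polys"
  then have fin: "finite {n. f $$ n \<noteq> 0}" by (simp add: laurent_polys_def)
  obtain N where "\<forall>x\<in>{n. f $$ n \<noteq> 0}. x \<le> N"
    using bdd_above_finite[OF fin] unfolding bdd_above_def by blast
  then show "\<exists>N. \<forall>n>N. f $$ n = 0" by (meson linorder_not_less mem_Collect_eq)
next
  assume "\<exists>N. \<forall>n>N. f $$ n = 0"
  then obtain N where N: "\<forall>n>N. f $$ n = 0" by blast
  have "{n. f $$ n \<noteq> 0} \<subseteq> {fls_subdegree f..N}"
    using N fls_subdegree_leI by (auto simp: not_less[symmetric])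
  then show "f \<in> laurent_polys" unfolding laurent_polys_def by (auto intro: finite_subset)
qed

lemma prod_nth:
  assumes "f \<in> laurent_polys"
  shows "(f * g) $$ n = (\<Sum>i\<in>{i. f $$ i \<noteq> 0}. f $$ i * g $$ (n - i))"
proof -
  define S where "S = {i. f $$ i \<noteq> 0}"
  have finS: "finite S" using assms by (simp add: laurent_polys_def S_def)
  define df where "df = fls_subdegree f"
  define dg where "dg = fls_subdegree g"
  have "(f * g) $$ n = (\<Sum>i=df..n - dg. f $$ i * g $$ (n - i))"
    unfolding df_def dg_def by (rule fls_times_nth(2))
  also have "\<dots> = (\<Sum>i\<in>S \<inter> {df..n - dg}. f $$ i * g $$ (n - i))"
    by (rule sum.mono_neutral_right) (auto simp: S_def)
  also have "\<dots> = (\<Sum>i\<in>S. f $$ i * g $$ (n - i))"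
  proof (rule sum.mono_neutral_left[OF finS])
    show "\<forall>i\<in>S - S \<inter> {df..n - dg}. f $$ i * g $$ (n - i) = 0"
    proof
      fix i assume i: "i \<in> S - S \<inter> {df..n - dg}"
      then have "df \<le> i" using fls_subdegree_leI by (auto simp: S_def df_def)
      with i have "n - i < dg" by auto
      then show "f $$ i * g $$ (n - i) = 0" by (simp add: dg_def nth_less_subdegree_zero)
    qed
  qed auto
  finally show ?thesis by (simp add: S_def)
qed

definition mon :: "'b::comm_ring_1 \<Rightarrow> int \<Rightarrow> 'b fls" where
  "mon x n = fls_shift (- n) (fls_const x)"

lemma mon_nth [simp]: "mon x n $$ m = (if m = n then x else 0)"
  by (simp add: mon_def)

lemma mon_mult: "mon x a * mon y b = mon (x * y) (a + b)"
  unfolding mon_def fls_times_both_shifted_simp by simp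

lemma mon_add: "mon x n + mon y n = mon (x + y) n"
  by (rule fls_eqI) simp

lemma mon_zero: "mon 0 n = 0"
  by (rule fls_eqI) simp

lemma mon_lp: "mon x n \<in> laurent_polys"
  by (auto simp: lp_iff intro!: exI[of _ n])

lemma fls_decomp:
  assumes "f \<in> laurent_polys"
  shows "f = (\<Sum>n\<in>{n. f $$ n \<noteq> 0}. mon (f $$ n) n)"
proof (rule fls_eqI)
  fix m
  have fin: "finite {n. f $$ n \<noteq> 0}" using assms by (simp add: laurent_polys_def)
  have "(\<Sum>n\<in>{n. f $$ n \<noteq> 0}. mon (f $$ n) n) $$ m = (\<Sum>n\<in>{n. f $$ n \<noteq> 0}. if m = n then f $$ n else 0)"
    by (simp add: fls_nth_sum)
  also have "\<dots> = f $$ m" using fin by (simp add: sum.delta)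
  finally show "f $$ m = (\<Sum>n\<in>{n. f $$ n \<noteq> 0}. mon (f $$ n) n) $$ m" by simp
qed

context zpg begin

abbreviation "RG \<equiv> rees_grading p G"
abbreviation "It \<equiv> fixed_ideal p RG"

lemma RG_iff: "f \<in> RG i \<longleftrightarrow> f \<in> laurent_polys \<and> (\<forall>n. f $$ n \<in> Jp (nat (- n))) \<and> (\<forall>n. f $$ n \<in> G i)"
proof -
  have "(\<forall>n<0. f $$ n \<in> Jp (nat (- n))) \<longleftrightarrow> (\<forall>n. f $$ n \<in> Jp (nat (- n)))"
  proof
    assume h: "\<forall>n<0. f $$ n \<in> Jp (nat (- n))"
    show "\<forall>n. f $$ n \<in> Jp (nat (- n))"
    proof
      fix n show "f $$ n \<in> Jp (nat (- n))"
      proof (cases "n < 0")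
        case True then show ?thesis using h by blast
      next
        case False then have "nat (- n) = 0" by simp
        then show ?thesis by simp
      qed
    qed
  qed blast
  then show ?thesis unfolding rees_grading_def rees_ext_def by blast
qed

lemma RG_mult:
  assumes "i < p" "j < p" "f \<in> RG i" "g \<in> RG j"
  shows "f * g \<in> RG ((i + j) mod p)"
proof -
  define S where "S = {k. f $$ k \<noteq> 0}"
  have flp: "f \<in> laurent_polys" and glp: "g \<in> laurent_polys" using assms by (auto simp: RG_iff)
  have finS: "finite S" using flp by (simp add: laurent_polys_def S_def)
  have nth: "(f * g) $$ n = (\<Sum>k\<in>S. f $$ k * g $$ (n - k))" for n
    unfolding S_def by (rule prod_nth[OF flp])
  obtain Nf where Nf: "\<forall>n>Nf. f $$ n = 0" using flp lp_iff by blast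
  obtain Ng where Ng: "\<forall>n>Ng. g $$ n = 0" using glp lp_iff by blast
  have "\<forall>n>Nf + Ng. (f * g) $$ n = 0"
  proof (intro allI impI)
    fix n assume n: "n > Nf + Ng"
    have "f $$ k * g $$ (n - k) = 0" if "k \<in> S" for k
    proof -
      have "k \<le> Nf" using that Nf S_def not_less by auto
      then show ?thesis using Ng n by auto
    qed
    then show "(f * g) $$ n = 0" by (simp add: nth)
  qed
  then have "f * g \<in> laurent_polys" using lp_iff by blast
  moreover have "(f * g) $$ n \<in> Jp (nat (- n))" for n
  proof -
    have "f $$ k * g $$ (n - k) \<in> Jp (nat (- n))" for k
    proof -
      have "f $$ k * g $$ (n - k) \<in> Jp (nat (- k) + nat (- (n - k)))"
      proof (rule ip_prod)
        show "f $$ k \<in> Jp (nat (- k))" using assms by (simp add: RG_iff)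
        show "g $$ (n - k) \<in> Jp (nat (- (n - k)))" using assms(4) unfolding RG_iff by blast
      qed
      moreover have "nat (- n) \<le> nat (- k) + nat (- (n - k))" by simp
      ultimately show ?thesis using ip_anti by blast
    qed
    then show ?thesis by (simp add: nth ip_sum finS del: ideal_pow.simps)
  qed
  moreover have "(f * g) $$ n \<in> G ((i + j) mod p)" for n
  proof -
    have "f $$ k * g $$ (n - k) \<in> G ((i + j) mod p)" for k
      using assms by (intro Gmult) (auto simp: RG_iff)
    then show ?thesis using p_gt1 by (simp add: nth Gsum finS)
  qed
  ultimately show ?thesis by (simp add: RG_iff)
qed

lemma RG_add: "i < p \<Longrightarrow> f \<in> RG i \<Longrightarrow> g \<in> RG i \<Longrightarrow> f + g \<in> RG i"
proof -
  assume a: "i < p" "f \<in> RG i" "g \<in> RG i"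
  then obtain Nf Ng where "\<forall>n>Nf. f $$ n = 0" "\<forall>n>Ng. g $$ n = 0" by (meson RG_iff lp_iff)
  then have "\<forall>n>max Nf Ng. (f + g) $$ n = 0" by simp
  then have "f + g \<in> laurent_polys" unfolding lp_iff by blast
  then show ?thesis using a by (auto simp: RG_iff ip_add Gadd simp del: ideal_pow.simps)
qed

lemma RG_neg: "i < p \<Longrightarrow> f \<in> RG i \<Longrightarrow> - f \<in> RG i"
  by (auto simp: RG_iff lp_iff ip_neg Gneg simp del: ideal_pow.simps)

lemma RG_zero: "i < p \<Longrightarrow> 0 \<in> RG i"
  by (auto simp: RG_iff lp_iff ip_zero G0 simp del: ideal_pow.simps)

lemma mon_RG: "i < p \<Longrightarrow> x \<in> G i \<Longrightarrow> x \<in> Jp (nat (- n)) \<Longrightarrow> mon x n \<in> RG i"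
  by (auto simp: RG_iff mon_lp ip_zero G0 simp del: ideal_pow.simps)

lemma one_RG: "1 \<in> RG 0"
proof -
  have "mon 1 0 \<in> RG 0" using one_G0 p_gt1 by (intro mon_RG) auto
  moreover have "mon 1 0 = (1 :: 'a fls)" by (rule fls_eqI) simp
  ultimately show ?thesis by simp
qed

lemma It_gen: "1 \<le> i \<Longrightarrow> i < p \<Longrightarrow> 1 \<le> j \<Longrightarrow> j < p \<Longrightarrow> i + j = p \<Longrightarrow> f \<in> RG i \<Longrightarrow> g \<in> RG j \<Longrightarrow> f * g \<in> It"
  unfolding fixed_ideal_def by (rule add_closure.ac_base) blast

lemma It_sum: "finite A \<Longrightarrow> (\<And>x. x \<in> A \<Longrightarrow> f x \<in> It) \<Longrightarrow> sum f A \<in> It"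
  unfolding fixed_ideal_def by (rule ac_sum)

lemma It_add: "f \<in> It \<Longrightarrow> g \<in> It \<Longrightarrow> f + g \<in> It"
  unfolding fixed_ideal_def by (rule add_closure.ac_add)

lemma It_sub: "f \<in> It \<Longrightarrow> f \<in> RG 0 \<and> (\<forall>n. f $$ n \<in> I)"
  unfolding fixed_ideal_def[of p RG]
proof (induction rule: add_closure.induct)
  case ac_zero then show ?case using RG_zero p_gt1 I_zero by simp
next
  case (ac_base h)
  then obtain f g i j where fg: "h = f * g" "1 \<le> i" "i < p" "1 \<le> j" "j < p" "i + j = p" "f \<in> RG i" "g \<in> RG j"
    by blast
  have "h \<in> RG 0" using RG_mult[of i j f g] fg by simp
  moreover have "h $$ n \<in> I" for n
  proof -
    have flp: "f \<in> laurent_polys" using fg by (simp add: RG_iff)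
    have "finite {k. f $$ k \<noteq> 0}" using flp by (simp add: laurent_polys_def)
    moreover have "f $$ k * g $$ (n - k) \<in> I" for k
      using fg by (intro I_gen[of i j]) (auto simp: RG_iff)
    ultimately show ?thesis using fg prod_nth[OF flp] by (simp add: I_sum)
  qed
  ultimately show ?case by blast
next
  case (ac_add x y) then show ?case using RG_add p_gt1 I_add by simp
qed

lemma monI: "x \<in> I \<Longrightarrow> n \<ge> 0 \<Longrightarrow> mon x n \<in> It"
  unfolding fixed_ideal_def[of p G]
proof (induction rule: add_closure.induct)
  case ac_zero then show ?case by (simp add: mon_zero fixed_ideal_def add_closure.ac_zero)
next
  case (ac_base x)
  then obtain a b i j where ab: "x = a * b" "1 \<le> i" "i < p" "1 \<le> j" "j < p" "i + j = p" "a \<in> G i" "b \<in> G j"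
    by blast
  have "mon a n * mon b 0 \<in> It"
    using ab ac_base.prems by (intro It_gen[of i j] mon_RG) auto
  then show ?case using ab by (simp add: mon_mult)
next
  case (ac_add x y)
  have "mon x n \<in> It" "mon y n \<in> It" using ac_add.IH ac_add.prems by simp_all
  then have "mon x n + mon y n \<in> It" by (rule It_add)
  then show ?case by (simp add: mon_add fixed_ideal_def)
qed

lemma monT: "x \<in> T m \<Longrightarrow> mon x (- int m) \<in> It"
  unfolding T_def
proof (induction rule: add_closure.induct)
  case ac_zero then show ?case by (simp add: mon_zero fixed_ideal_def add_closure.ac_zero)
next
  case (ac_base x)
  then obtain y z i j a b where yz: "x = y * z" "1 \<le> i" "i < p" "1 \<le> j" "j < p" "i + j = p" "a + b = m"
      "y \<in> G i" "y \<in> Jp a" "z \<in> G j" "z \<in> Jp b"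
    by blast
  have "mon y (- int a) * mon z (- int b) \<in> It"
    using yz by (intro It_gen[of i j] mon_RG) auto
  moreover have "- int a + - int b = - int m" using yz(7) by simp
  ultimately show ?case using yz(1) by (simp only: mon_mult)
next
  case (ac_add x y)
  have "mon x (- int m) + mon y (- int m) \<in> It" using ac_add.IH by (rule It_add)
  then show ?case by (simp add: mon_add fixed_ideal_def)
qed

lemma sub_It: assumes "f \<in> RG 0" "\<forall>n\<ge>0. f $$ n \<in> I" shows "f \<in> It"
proof -
  have flp: "f \<in> laurent_polys" using assms by (simp add: RG_iff)
  have "mon (f $$ n) n \<in> It" for n
  proof (cases "n \<ge> 0")
    case True then show ?thesis using assms monI by blast
  next
    case False
    define k where "k = nat (- n) - 1"
    have k: "nat (- n) = Suc k" using False by (simp add: k_def)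
    have "f $$ n \<in> Jp (nat (- n))" "f $$ n \<in> G 0" using assms(1) unfolding RG_iff by blast+
    then have "f $$ n \<in> Jp (Suc k)" "f $$ n \<in> G 0" using k by simp_all
    then have "f $$ n \<in> T (Suc k)" by (rule Jp_G0)
    then have "mon (f $$ n) (- int (Suc k)) \<in> It" by (rule monT)
    moreover have "- int (Suc k) = n" using k False by linarith
    ultimately show ?thesis by simp
  qed
  then have "(\<Sum>n\<in>{n. f $$ n \<noteq> 0}. mon (f $$ n) n) \<in> It"
    using flp by (intro It_sum) (auto simp: laurent_polys_def)
  then show ?thesis using fls_decomp[OF flp] by simp
qed

end



lemma coset_ring_of: "a_r_coset (ring_of S) H x = (\<lambda>h. h + x) ` H"
  by (auto simp: a_r_coset_def r_coset_def ring_of_def)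

context zpg begin

abbreviation "R0 \<equiv> ring_of (G 0)"
abbreviation "Q \<equiv> R0 Quot I"
abbreviation "RT \<equiv> ring_of (RG 0)"
abbreviation "pq \<equiv> a_r_coset R0 I"

definition psi :: "'a fls \<Rightarrow> nat \<Rightarrow> 'a set" where
  "psi f = (\<lambda>n. pq (f $$ int n))"

lemma p0: "0 < p" using p_gt1 by simp

lemma G0_mult: "x \<in> G 0 \<Longrightarrow> y \<in> G 0 \<Longrightarrow> x * y \<in> G 0"
  using Gmult[OF p0 p0] by simp

lemma cring_R0: "cring R0"
  by (rule ring_of_cring) (auto intro: G0 one_G0 Gadd G0_mult Gneg p0)

lemma cring_RT: "cring RT"
  by (rule ring_of_cring) (auto intro: RG_zero one_RG RG_add RG_neg p0 dest: RG_mult[OF p0 p0])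

lemma R0_inv: "x \<in> G 0 \<Longrightarrow> a_inv R0 x = - x"
proof -
  interpret cring R0 by (rule cring_R0)
  assume x: "x \<in> G 0"
  have "- x \<in> carrier R0" using x Gneg p0 by (simp add: ring_of_def)
  moreover have "- x \<oplus>\<^bsub>R0\<^esub> x = \<zero>\<^bsub>R0\<^esub>" by (simp add: ring_of_def)
  ultimately show ?thesis using minus_equality x by (simp add: ring_of_def)
qed

lemma ideal_I: "ideal I R0"
proof -
  interpret cring R0 by (rule cring_R0)
  show ?thesis
  proof (rule idealI)
    show "ring R0" by (rule ring_axioms)
    have inv: "\<And>a. a \<in> I \<Longrightarrow> a_inv R0 a \<in> I"
      using R0_inv I_neg I_G0 by simp
    show "subgroup I (add_monoid R0)"
      by (rule add.subgroupI) (use inv I_zero I_G0 I_add in \<open>auto simp: ring_of_def\<close>)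
    show "\<And>a x. a \<in> I \<Longrightarrow> x \<in> carrier R0 \<Longrightarrow> x \<otimes>\<^bsub>R0\<^esub> a \<in> I"
      using I_mult by (simp add: ring_of_def)
    show "\<And>a x. a \<in> I \<Longrightarrow> x \<in> carrier R0 \<Longrightarrow> a \<otimes>\<^bsub>R0\<^esub> x \<in> I"
      using I_mult by (simp add: ring_of_def mult.commute)
  qed
qed

lemma cring_Q: "cring Q"
  by (rule ideal.quotient_is_cring[OF ideal_I cring_R0])

lemma cring_P: "cring (UP Q)"
proof -
  interpret UP_cring Q "UP Q" by (simp add: UP_cring_def UP_def cring_Q)
  show ?thesis by (rule UP_cring)
qed

lemma pi_hom: "ring_hom_ring R0 Q pq"
  by (rule ideal.rcos_ring_hom_ring[OF ideal_I])

lemma pi_eq: "a - b \<in> I \<Longrightarrow> pq a = pq b"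
proof -
  assume ab: "a - b \<in> I"
  have "(\<lambda>h. h + a) ` I = (\<lambda>h. h + b) ` I"
  proof
    show "(\<lambda>h. h + a) ` I \<subseteq> (\<lambda>h. h + b) ` I"
    proof
      fix x assume "x \<in> (\<lambda>h. h + a) ` I"
      then obtain h where h: "h \<in> I" "x = h + a" by blast
      then have "h + (a - b) \<in> I" using ab I_add by blast
      moreover have "x = (h + (a - b)) + b" using h by simp
      ultimately show "x \<in> (\<lambda>h. h + b) ` I" by blast
    qed
  next
    show "(\<lambda>h. h + b) ` I \<subseteq> (\<lambda>h. h + a) ` I"
    proof
      fix x assume "x \<in> (\<lambda>h. h + b) ` I"
      then obtain h where h: "h \<in> I" "x = h + b" by blast
      then have "h + - (a - b) \<in> I" using ab I_add I_neg by blast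
      moreover have "x = (h + - (a - b)) + a" using h by simp
      ultimately show "x \<in> (\<lambda>h. h + a) ` I" by blast
    qed
  qed
  then show ?thesis by (simp add: coset_ring_of)
qed

lemma pi_zero: "pq 0 = I"
  by (simp add: coset_ring_of)

lemma pi_I_iff: "pq x = I \<longleftrightarrow> x \<in> I"
proof
  assume "pq x = I"
  then have "0 + x \<in> I" using I_zero by (auto simp: coset_ring_of)
  then show "x \<in> I" by simp
next
  assume "x \<in> I"
  then have "pq x = pq 0" by (intro pi_eq) simp
  then show "pq x = I" by (simp add: pi_zero)
qed

lemma carrier_Q: "carrier Q = pq ` G 0"
  by (auto simp: FactRing_def A_RCOSETS_def' ring_of_def)

lemma zero_Q: "\<zero>\<^bsub>Q\<^esub> = I" by (simp add: FactRing_def)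
lemma one_Q: "\<one>\<^bsub>Q\<^esub> = pq 1" by (simp add: FactRing_def ring_of_def)

lemma pi_add: "a \<in> G 0 \<Longrightarrow> b \<in> G 0 \<Longrightarrow> pq a \<oplus>\<^bsub>Q\<^esub> pq b = pq (a + b)"
  using ring_hom_add[OF ideal.rcos_ring_hom[OF ideal_I], of a b] by (simp add: ring_of_def)

lemma pi_mult: "a \<in> G 0 \<Longrightarrow> b \<in> G 0 \<Longrightarrow> pq a \<otimes>\<^bsub>Q\<^esub> pq b = pq (a * b)"
  using ring_hom_mult[OF ideal.rcos_ring_hom[OF ideal_I], of a b] by (simp add: ring_of_def)

lemma finsum_R0: "finite A \<Longrightarrow> (\<And>x. x \<in> A \<Longrightarrow> h x \<in> G 0) \<Longrightarrow> finsum R0 h A = sum h A"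
proof (induction A rule: finite_induct)
  case empty
  interpret cring R0 by (rule cring_R0)
  show ?case by (simp only: finsum_empty) (simp add: ring_of_def)
next
  case (insert a A)
  interpret cring R0 by (rule cring_R0)
  have "finsum R0 h (insert a A) = h a \<oplus>\<^bsub>R0\<^esub> finsum R0 h A"
    using insert by (intro finsum_insert) (auto simp: ring_of_def)
  then show ?case using insert by (simp add: ring_of_def)
qed

end



context zpg begin

lemma negI: "f \<in> RG 0 \<Longrightarrow> k < 0 \<Longrightarrow> f $$ k \<in> I"
proof -
  assume f: "f \<in> RG 0" and k: "k < 0"
  have "f $$ k \<in> Jp (nat (- k))" "f $$ k \<in> G 0" using f unfolding RG_iff by blast+
  moreover have "Jp (nat (- k)) \<subseteq> Jp (Suc 0)" using k by (intro ip_anti) simp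
  ultimately have "f $$ k \<in> T (Suc 0)" using Jp_G0 by blast
  then show ?thesis by (rule T_I)
qed

lemma RG0_G0: "f \<in> RG 0 \<Longrightarrow> f $$ n \<in> G 0"
  unfolding RG_iff by blast

lemma psi_carrier: "f \<in> RG 0 \<Longrightarrow> psi f \<in> carrier (UP Q)"
proof -
  assume f: "f \<in> RG 0"
  then obtain N where N: "\<forall>n>N. f $$ n = 0" using lp_iff RG_iff by blast
  have "psi f i \<in> carrier Q" for i using f RG0_G0 by (simp add: psi_def carrier_Q)
  moreover have "bound \<zero>\<^bsub>Q\<^esub> (nat N) (psi f)"
    unfolding bound_def using N by (auto simp: psi_def zero_Q pi_zero)
  ultimately show ?thesis by (auto simp: UP_def up_def)
qed

lemma int_atMost: "{0..int n} = int ` {..n}"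
proof
  show "{0..int n} \<subseteq> int ` {..n}"
  proof
    fix k assume "k \<in> {0..int n}"
    then have "k = int (nat k)" "nat k \<in> {..n}" by auto
    then show "k \<in> int ` {..n}" by blast
  qed
qed auto

lemma prod_diff:
  assumes f: "f \<in> RG 0" and g: "g \<in> RG 0"
  shows "(f * g) $$ int n - (\<Sum>i\<le>n. f $$ int i * g $$ (int n - int i)) \<in> I"
proof -
  define S where "S = {k. f $$ k \<noteq> 0}"
  define B where "B = {0..int n}"
  define h where "h k = f $$ k * g $$ (int n - k)" for k
  have flp: "f \<in> laurent_polys" using f by (simp add: RG_iff)
  have finS: "finite S" using flp by (simp add: laurent_polys_def S_def)
  have finB: "finite B" by (simp add: B_def)
  have "(f * g) $$ int n = sum h S" unfolding h_def S_def by (rule prod_nth[OF flp])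
  also have "\<dots> = sum h (S \<union> B)"
    using finS finB by (intro sum.mono_neutral_left) (auto simp: h_def S_def)
  also have "S \<union> B = B \<union> (S - B)" by blast
  also have "sum h (B \<union> (S - B)) = sum h B + sum h (S - B)"
    by (rule sum.union_disjoint) (auto simp: finS finB)
  finally have eq1: "(f * g) $$ int n = sum h B + sum h (S - B)" .
  have eq2: "(\<Sum>i\<le>n. f $$ int i * g $$ (int n - int i)) = sum h B"
    unfolding B_def int_atMost by (simp add: sum.reindex h_def)
  have "sum h (S - B) \<in> I"
  proof (rule I_sum)
    show "finite (S - B)" using finS by simp
  next
    fix k assume k: "k \<in> S - B"
    show "h k \<in> I"
    proof (cases "k < 0")
      case True
      then have "f $$ k \<in> I" using negI f by blast
      then have "g $$ (int n - k) * f $$ k \<in> I" using I_mult RG0_G0 g by blast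
      then show ?thesis by (simp add: h_def mult.commute)
    next
      case False
      then have "int n - k < 0" using k by (auto simp: B_def)
      then have "g $$ (int n - k) \<in> I" using negI g by blast
      then show ?thesis using I_mult RG0_G0 f by (simp add: h_def)
    qed
  qed
  then show ?thesis using eq1 eq2 by simp
qed

lemma psi_mult: assumes f: "f \<in> RG 0" and g: "g \<in> RG 0"
  shows "psi (f * g) = psi f \<otimes>\<^bsub>UP Q\<^esub> psi g"
proof -
  have cf: "psi f \<in> up Q" "psi g \<in> up Q" using psi_carrier f g by (auto simp: UP_def)
  have "psi f \<otimes>\<^bsub>UP Q\<^esub> psi g = (\<lambda>n. \<Oplus>\<^bsub>Q\<^esub>i \<in> {..n}. psi f i \<otimes>\<^bsub>Q\<^esub> psi g (n - i))"
    using cf by (simp add: UP_def)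
  also have "\<dots> = (\<lambda>n. pq (\<Sum>i\<le>n. f $$ int i * g $$ (int n - int i)))"
  proof
    fix n
    interpret Qr: cring Q by (rule cring_Q)
    define hh where "hh i = f $$ int i * g $$ (int n - int i)" for i
    have hhG: "hh i \<in> G 0" for i using RG0_G0 f g G0_mult by (simp add: hh_def)
    have "(\<Oplus>\<^bsub>Q\<^esub>i \<in> {..n}. psi f i \<otimes>\<^bsub>Q\<^esub> psi g (n - i)) = (\<Oplus>\<^bsub>Q\<^esub>i \<in> {..n}. (pq \<circ> hh) i)"
    proof (rule Qr.finsum_cong'[OF refl])
      show "\<And>i. i \<in> {..n} \<Longrightarrow> psi f i \<otimes>\<^bsub>Q\<^esub> psi g (n - i) = (pq \<circ> hh) i"
        using pi_mult RG0_G0 f g by (simp add: psi_def hh_def of_nat_diff)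
      show "pq \<circ> hh \<in> {..n} \<rightarrow> carrier Q" using hhG by (auto simp: carrier_Q)
    qed
    also have "\<dots> = pq (finsum R0 hh {..n})"
      using ring_hom_ring.hom_finsum[OF pi_hom, of hh "{..n}"] hhG by (simp add: ring_of_def Pi_def comp_def)
    also have "finsum R0 hh {..n} = (\<Sum>i\<le>n. hh i)" using hhG by (intro finsum_R0) auto
    finally show "(\<Oplus>\<^bsub>Q\<^esub>i \<in> {..n}. psi f i \<otimes>\<^bsub>Q\<^esub> psi g (n - i)) =
       pq (\<Sum>i\<le>n. f $$ int i * g $$ (int n - int i))" by (simp add: hh_def)
  qed
  also have "\<dots> = psi (f * g)"
    unfolding psi_def using prod_diff[OF f g] by (intro ext pi_eq[symmetric])
  finally show ?thesis by simp
qed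

lemma psi_add: assumes f: "f \<in> RG 0" and g: "g \<in> RG 0"
  shows "psi (f + g) = psi f \<oplus>\<^bsub>UP Q\<^esub> psi g"
proof -
  have cf: "psi f \<in> up Q" "psi g \<in> up Q" using psi_carrier f g by (auto simp: UP_def)
  then show ?thesis using pi_add RG0_G0 f g by (simp add: UP_def psi_def)
qed

lemma psi_one: "psi 1 = \<one>\<^bsub>UP Q\<^esub>"
proof
  fix i show "psi 1 i = \<one>\<^bsub>UP Q\<^esub> i"
    by (cases "i = 0") (simp_all add: UP_def psi_def one_Q zero_Q pi_zero)
qed

lemma RT_simps: "carrier RT = RG 0" "x \<otimes>\<^bsub>RT\<^esub> y = x * y" "x \<oplus>\<^bsub>RT\<^esub> y = x + y" "\<one>\<^bsub>RT\<^esub> = 1"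
  by (simp_all add: ring_of_def)

lemma psi_hom: "psi \<in> ring_hom RT (UP Q)"
proof (rule ring_hom_memI)
  show "\<And>x. x \<in> carrier RT \<Longrightarrow> psi x \<in> carrier (UP Q)"
    unfolding RT_simps by (rule psi_carrier)
  show "\<And>x y. x \<in> carrier RT \<Longrightarrow> y \<in> carrier RT \<Longrightarrow> psi (x \<otimes>\<^bsub>RT\<^esub> y) = psi x \<otimes>\<^bsub>UP Q\<^esub> psi y"
    unfolding RT_simps by (rule psi_mult)
  show "\<And>x y. x \<in> carrier RT \<Longrightarrow> y \<in> carrier RT \<Longrightarrow> psi (x \<oplus>\<^bsub>RT\<^esub> y) = psi x \<oplus>\<^bsub>UP Q\<^esub> psi y"
    unfolding RT_simps by (rule psi_add)
  show "psi \<one>\<^bsub>RT\<^esub> = \<one>\<^bsub>UP Q\<^esub>" unfolding RT_simps by (rule psi_one)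
qed

lemma psi_hom_ring: "ring_hom_ring RT (UP Q) psi"
  by (rule ring_hom_ringI2) (use cring_RT cring_P psi_hom in \<open>auto simp: cring.axioms(1)\<close>)

lemma psi_kernel: "a_kernel RT (UP Q) psi = It"
proof -
  have "psi f = \<zero>\<^bsub>UP Q\<^esub> \<longleftrightarrow> (\<forall>n\<ge>0. f $$ n \<in> I)" for f
  proof -
    have "psi f = \<zero>\<^bsub>UP Q\<^esub> \<longleftrightarrow> (\<forall>i. pq (f $$ int i) = I)"
      by (auto simp: UP_def zero_Q psi_def fun_eq_iff)
    also have "\<dots> \<longleftrightarrow> (\<forall>i. f $$ int i \<in> I)" by (simp add: pi_I_iff)
    also have "\<dots> \<longleftrightarrow> (\<forall>n\<ge>0. f $$ n \<in> I)"
      by (metis nonneg_int_cases of_nat_0_le_iff)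
    finally show ?thesis .
  qed
  then show ?thesis using It_sub sub_It by (auto simp: a_kernel_def' RT_simps)
qed

lemma psi_surj: "psi ` carrier RT = carrier (UP Q)"
proof
  show "psi ` carrier RT \<subseteq> carrier (UP Q)" using psi_carrier unfolding RT_simps by blast
next
  show "carrier (UP Q) \<subseteq> psi ` carrier RT"
  proof
    fix q assume q: "q \<in> carrier (UP Q)"
    then have q': "q \<in> up Q" by (simp add: UP_def)
    then have q1: "q \<in> UNIV \<rightarrow> carrier Q" and q2: "\<exists>n. bound \<zero>\<^bsub>Q\<^esub> n q"
      by (simp_all add: up_def)
    have qc: "q i \<in> pq ` G 0" for i using q1 carrier_Q by auto
    obtain N where bN: "bound \<zero>\<^bsub>Q\<^esub> N q" using q2 by blast
    have N: "N < m \<Longrightarrow> q m = I" for m using bound.bound[OF bN, of m] zero_Q by simp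
    define a where "a i = (SOME x. x \<in> G 0 \<and> q i = pq x)" for i
    have a: "a i \<in> G 0 \<and> q i = pq (a i)" for i
    proof -
      have "\<exists>x. x \<in> G 0 \<and> q i = pq x" using qc[of i] by blast
      then show ?thesis unfolding a_def by (rule someI_ex)
    qed
    define f where "f = fps_to_fls (Abs_fps (\<lambda>i. if i \<le> N then a i else 0))"
    have fn: "f $$ n = (if n < 0 then 0 else if nat n \<le> N then a (nat n) else 0)" for n
      by (simp add: f_def)
    have "f \<in> laurent_polys" unfolding lp_iff using fn by (intro exI[of _ "int N"]) auto
    moreover have "f $$ n \<in> Jp (nat (- n))" for n
      by (cases "n < 0") (simp_all add: fn ip_zero)
    moreover have "f $$ n \<in> G 0" for n using a G0 p0 by (simp add: fn)
    ultimately have fR: "f \<in> RG 0" by (simp add: RG_iff)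
    have "psi f = q"
    proof
      fix i show "psi f i = q i"
        using a[of i] N[of i] by (cases "i \<le> N") (simp_all add: psi_def fn pi_zero)
    qed
    then show "q \<in> psi ` carrier RT" using fR unfolding RT_simps by blast
  qed
qed

lemma main:
  "\<exists>h \<in> ring_iso (RT Quot It) (UP Q).
     \<forall>c. h (a_r_coset RT It (fls_const (\<phi> c))) = up_ring.monom (UP Q) (pq (\<phi> c)) 0"
proof -
  interpret H: ring_hom_ring RT "UP Q" psi by (rule psi_hom_ring)
  have iso: "(\<lambda>X. the_elem (psi ` X)) \<in> ring_iso (RT Quot It) (UP Q)"
    using H.FactRing_iso_set[OF psi_surj] unfolding psi_kernel .
  have val: "the_elem (psi ` (a_r_coset RT It (fls_const (\<phi> c)))) = up_ring.monom (UP Q) (pq (\<phi> c)) 0" for c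
  proof -
    have phiG: "\<phi> c \<in> G 0" using Gsmult[OF p0 one_G0, of c] by simp
    have "fls_const (\<phi> c) = mon (\<phi> c) 0" by (rule fls_eqI) simp
    then have fc: "fls_const (\<phi> c) \<in> carrier RT"
      using mon_RG[OF p0 phiG, of 0] unfolding RT_simps by simp
    have "the_elem (psi ` (a_r_coset RT It (fls_const (\<phi> c)))) = psi (fls_const (\<phi> c))"
      using H.the_elem_simp[OF fc] psi_kernel by simp
    also have "\<dots> = up_ring.monom (UP Q) (pq (\<phi> c)) 0"
    proof -
      have "pq (\<phi> c) \<in> carrier Q" using phiG by (simp add: carrier_Q)
      then have m: "up_ring.monom (UP Q) (pq (\<phi> c)) 0 = (\<lambda>i. if i = 0 then pq (\<phi> c) else I)"
        unfolding UP_def zero_Q by simp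
      have "psi (fls_const (\<phi> c)) = (\<lambda>i. if i = 0 then pq (\<phi> c) else I)"
      proof
        fix i show "psi (fls_const (\<phi> c)) i = (if i = 0 then pq (\<phi> c) else I)"
          by (cases "i = 0") (simp_all add: psi_def pi_zero)
      qed
      then show ?thesis using m by simp
    qed
    finally show ?thesis .
  qed
  show ?thesis
  proof (rule bexI[OF _ iso])
    show "\<forall>c. the_elem (psi ` (a_r_coset RT It (fls_const (\<phi> c)))) = up_ring.monom (UP Q) (pq (\<phi> c)) 0"
      using val by blast
  qed
qed

end

theorem corollary2p6:
  fixes p :: nat and \<phi> :: "'f::field \<Rightarrow> 'a::comm_ring_1" and G :: "nat \<Rightarrow> 'a set"
  assumes "prime p"
    and "zp_graded_F_algebra p \<phi> G"
  shows "\<exists>h \<in> ring_iso (ring_of (rees_grading p G 0) Quot fixed_ideal p (rees_grading p G))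
                     (UP (ring_of (G 0) Quot fixed_ideal p G)).
           \<forall>c. h (a_r_coset (ring_of (rees_grading p G 0)) (fixed_ideal p (rees_grading p G))
                    (fls_const (\<phi> c)))
               = up_ring.monom (UP (ring_of (G 0) Quot fixed_ideal p G))
                   (a_r_coset (ring_of (G 0)) (fixed_ideal p G) (\<phi> c)) 0"
proof -
  interpret zpg p \<phi> G by (rule zpg.intro[OF assms])
  show ?thesis by (rule main)
qed

end
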